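(* Let $R$ be an abelian ring and $\alpha$ a ring endomorphism of $R$. The following are equivalent: (1) $R$ is weakly $r$-clean; (2) the formal power series ring $R[[x]]$ is weakly $r$-clean; (3) the skew formal power series ring $R[[x;\alpha]]$ is weakly $r$-clean.
   Context: Rings are associative with identity; $R$ is abelian if all idempotents are central. $Idem(R)$ denotes idempotents and $Reg(R)=\{r: r=ryr \text{ for some } y\in R\}$ regular elements. An element is weakly $r$-clean if it equals $r+e$ or $r-e$ with $r\in Reg(R)$, $e\in Idem(R)$; a ring is weakly $r$-clean if all elements are. $R[[x;\alpha]]$ is the ring of formal power series $\sum_{i\ge0}a_ix^i$ with $a_i\in R$, with multiplication determined by $xr=\alpha(r)x$ for $r\in R$; $R[[x]]=R[[x;\mathrm{id}_R]]$. *)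

theory Defs
  imports "HOL-Algebra.Ring" "HOL-Algebra.RingHom"
begin

definition Idem_el :: "('a, 'b) ring_scheme \<Rightarrow> 'a set" where
  "Idem_el R = {e \<in> carrier R. mult R e e = e}"

definition Reg_el :: "('a, 'b) ring_scheme \<Rightarrow> 'a set" where
  "Reg_el R = {r \<in> carrier R. \<exists>y \<in> carrier R. r = mult R (mult R r y) r}"

definition abelian_ring :: "('a, 'b) ring_scheme \<Rightarrow> bool" where
  "abelian_ring R \<longleftrightarrow> (\<forall>e \<in> Idem_el R. \<forall>x \<in> carrier R. mult R e x = mult R x e)"

definition weakly_r_clean_elem :: "('a, 'b) ring_scheme \<Rightarrow> 'a \<Rightarrow> bool" where
  "weakly_r_clean_elem R a \<longleftrightarrow>
     (\<exists>r \<in> Reg_el R. \<exists>e \<in> Idem_el R. a = add R r e \<or> a = a_minus R r e)"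

definition weakly_r_clean :: "('a, 'b) ring_scheme \<Rightarrow> bool" where
  "weakly_r_clean R \<longleftrightarrow> (\<forall>a \<in> carrier R. weakly_r_clean_elem R a)"

text \<open>Skew formal power series ring R[[x;\<alpha>]]: a series \<Sum> a_i x^i is its
  coefficient sequence; multiplication from x r = \<alpha>(r) x, i.e.
  (f g)_n = \<Sum>_{i+j=n} f_i \<alpha>^i(g_j).\<close>

definition skew_fps :: "('a, 'b) ring_scheme \<Rightarrow> ('a \<Rightarrow> 'a) \<Rightarrow> (nat \<Rightarrow> 'a) ring" where
  "skew_fps R \<alpha> =
     \<lparr> carrier = {f. \<forall>n. f n \<in> carrier R},
       mult = (\<lambda>f g n. finsum R (\<lambda>i. mult R (f i) ((\<alpha> ^^ i) (g (n - i)))) {0..n}),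
       one = (\<lambda>n. if n = 0 then one R else zero R),
       zero = (\<lambda>n. zero R),
       add = (\<lambda>f g n. add R (f n) (g n)) \<rparr>"

definition fps_ring :: "('a, 'b) ring_scheme \<Rightarrow> (nat \<Rightarrow> 'a) ring" where
  "fps_ring R = skew_fps R id"

end

theory Submission
  imports Defs
begin

primrec inv_pre :: "('a, 'b) ring_scheme \<Rightarrow> ('a \<Rightarrow> 'a) \<Rightarrow> (nat \<Rightarrow> 'a) \<Rightarrow> 'a \<Rightarrow> nat \<Rightarrow> (nat \<Rightarrow> 'a)" where
  "inv_pre R \<alpha> f w 0 = (\<lambda>k. w)"
| "inv_pre R \<alpha> f w (Suc n) = (inv_pre R \<alpha> f w n)(Suc n :=
      a_inv R (mult R w (finsum R (\<lambda>i. mult R (f i) ((\<alpha> ^^ i) (inv_pre R \<alpha> f w n (Suc n - i)))) {1..Suc n})))"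

definition inv_ser :: "('a, 'b) ring_scheme \<Rightarrow> ('a \<Rightarrow> 'a) \<Rightarrow> (nat \<Rightarrow> 'a) \<Rightarrow> 'a \<Rightarrow> nat \<Rightarrow> 'a" where
  "inv_ser R \<alpha> f w = (\<lambda>k. inv_pre R \<alpha> f w k k)"

context ring begin


lemma central_idem:
  assumes ab: "abelian_ring R" and e: "e \<in> carrier R" "e \<otimes> e = e" and z: "z \<in> carrier R"
  shows "e \<otimes> z = z \<otimes> e"
  using ab e z unfolding abelian_ring_def Idem_el_def by auto

lemma decomp:
  assumes ab: "abelian_ring R" and r: "r \<in> carrier R" and y: "y \<in> carrier R"
    and ryr: "r = r \<otimes> y \<otimes> r" and e0: "e0 \<in> carrier R" "e0 \<otimes> e0 = e0"
    and s: "s \<in> carrier R" "s \<otimes> s = \<one>" "\<And>z. z \<in> carrier R \<Longrightarrow> s \<otimes> z = z \<otimes> s"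
  shows "\<exists>W. W \<in> carrier R \<and> (r \<oplus> (\<one> \<ominus> r \<otimes> y) \<otimes> s) \<otimes> W = \<one>"
    and "r \<otimes> y \<otimes> e0 \<oplus> (\<one> \<ominus> r \<otimes> y) \<otimes> (\<one> \<ominus> e0) \<in> Idem_el R"
proof -
  define e where "e = r \<otimes> y"
  have ec: "e \<in> carrier R" using r y e_def by simp
  have ee: "e \<otimes> e = e" unfolding e_def using r y ryr by (simp add: m_assoc[symmetric])
  have cen: "\<And>z. z \<in> carrier R \<Longrightarrow> e \<otimes> z = z \<otimes> e" using central_idem[OF ab ec ee] by simp
  have cen0: "\<And>z. z \<in> carrier R \<Longrightarrow> e0 \<otimes> z = z \<otimes> e0" using central_idem[OF ab e0] by simp
  have er: "e \<otimes> r = r" unfolding e_def using ryr by simp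
  have re: "r \<otimes> e = r" using cen[OF r] er by simp
  define g where "g = \<one> \<ominus> e"
  have gc: "g \<in> carrier R" using g_def ec by simp
  have rg: "r \<otimes> g = \<zero>" unfolding g_def using r ec re by (simp add: r_distr minus_eq r_minus r_neg)
  have ge: "g \<otimes> e = \<zero>" unfolding g_def using ec ee by (simp add: l_distr minus_eq l_minus r_neg)
  have eg: "e \<otimes> g = \<zero>" unfolding g_def using ec ee by (simp add: r_distr minus_eq r_minus r_neg)
  have gg: "g \<otimes> g = g" unfolding g_def using ec ee by (simp add: l_distr r_distr minus_eq l_minus r_minus a_assoc r_neg)
  have cg: "\<And>z. z \<in> carrier R \<Longrightarrow> g \<otimes> z = z \<otimes> g" unfolding g_def using ec cen
    by (simp add: l_distr r_distr minus_eq l_minus r_minus)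
  have sg: "s \<otimes> g = g \<otimes> s" using cg[OF s(1)] by simp
  have se: "s \<otimes> e = e \<otimes> s" using cen[OF s(1)] by simp
  have t1: "r \<otimes> (e \<otimes> y) = e" using re r ec y e_def[symmetric] by (simp add: m_assoc[symmetric])
  have t2: "r \<otimes> (g \<otimes> s) = \<zero>" using rg r gc s(1) s(2) by (simp add: m_assoc[symmetric])
  have t3: "(g \<otimes> s) \<otimes> (e \<otimes> y) = \<zero>"
  proof -
    have "(g \<otimes> s) \<otimes> (e \<otimes> y) = g \<otimes> ((s \<otimes> e) \<otimes> y)" using gc s(1) s(2) ec y by (simp add: m_assoc)
    also have "\<dots> = (g \<otimes> e) \<otimes> (s \<otimes> y)" using gc s(1) s(2) ec y se by (simp add: m_assoc)
    finally show ?thesis using ge s(1) s(2) y by simp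
  qed
  have t4: "(g \<otimes> s) \<otimes> (g \<otimes> s) = g"
  proof -
    have "(g \<otimes> s) \<otimes> (g \<otimes> s) = g \<otimes> ((s \<otimes> g) \<otimes> s)" using gc s(1) s(2) by (simp add: m_assoc)
    also have "\<dots> = (g \<otimes> g) \<otimes> (s \<otimes> s)" using gc s(1) s(2) sg by (simp add: m_assoc)
    finally show ?thesis using gg s(1) s(2) gc by simp
  qed
  show "\<exists>W. W \<in> carrier R \<and> (r \<oplus> (\<one> \<ominus> r \<otimes> y) \<otimes> s) \<otimes> W = \<one>"
  proof (intro exI conjI)
    show "e \<otimes> y \<oplus> g \<otimes> s \<in> carrier R" using ec y gc s(1) s(2) by simp
    have "(r \<oplus> g \<otimes> s) \<otimes> (e \<otimes> y \<oplus> g \<otimes> s)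
       = (r \<otimes> (e \<otimes> y) \<oplus> r \<otimes> (g \<otimes> s)) \<oplus> ((g \<otimes> s) \<otimes> (e \<otimes> y) \<oplus> (g \<otimes> s) \<otimes> (g \<otimes> s))"
      using r ec y gc s(1) s(2) by (simp add: l_distr r_distr a_ac)
    also have "\<dots> = e \<oplus> g" using t1 t2 t3 t4 ec gc by simp
    also have "\<dots> = \<one>" unfolding g_def using ec a_lcomm[of e "\<one>" "\<ominus> e"] by (simp add: minus_eq r_neg)
    finally show "(r \<oplus> (\<one> \<ominus> r \<otimes> y) \<otimes> s) \<otimes> (e \<otimes> y \<oplus> g \<otimes> s) = \<one>"
      unfolding g_def e_def .
  qed
  define h where "h = \<one> \<ominus> e0"
  have hc: "h \<in> carrier R" using h_def e0 by simp
  have hh: "h \<otimes> h = h" unfolding h_def using e0 by (simp add: l_distr r_distr minus_eq l_minus r_minus a_assoc r_neg)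
  have ch: "\<And>z. z \<in> carrier R \<Longrightarrow> h \<otimes> z = z \<otimes> h"
  proof -
    fix z assume z: "z \<in> carrier R"
    have q: "e0 \<otimes> z = z \<otimes> e0" by (rule cen0[OF z])
    show "h \<otimes> z = z \<otimes> h" unfolding h_def using e0 z q
      by (simp add: l_distr r_distr minus_eq l_minus r_minus)
  qed
  have e0h: "e0 \<otimes> h = \<zero>" unfolding h_def using e0 by (simp add: r_distr minus_eq r_minus r_neg)
  have he0: "h \<otimes> e0 = \<zero>" unfolding h_def using e0 by (simp add: l_distr minus_eq l_minus r_neg)
  have p: "\<And>a b c d. a \<in> carrier R \<Longrightarrow> b \<in> carrier R \<Longrightarrow> c \<in> carrier R \<Longrightarrow> d \<in> carrier R
      \<Longrightarrow> b \<otimes> c = c \<otimes> b \<Longrightarrow> (a \<otimes> b) \<otimes> (c \<otimes> d) = (a \<otimes> c) \<otimes> (b \<otimes> d)"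
  proof -
    fix a b c d assume c: "a \<in> carrier R" "b \<in> carrier R" "c \<in> carrier R" "d \<in> carrier R" "b \<otimes> c = c \<otimes> b"
    have "(a \<otimes> b) \<otimes> (c \<otimes> d) = a \<otimes> ((b \<otimes> c) \<otimes> d)" using c(1-4) by (simp add: m_assoc)
    also have "\<dots> = a \<otimes> ((c \<otimes> b) \<otimes> d)" using c(5) by simp
    also have "\<dots> = (a \<otimes> c) \<otimes> (b \<otimes> d)" using c(1-4) by (simp add: m_assoc)
    finally show "(a \<otimes> b) \<otimes> (c \<otimes> d) = (a \<otimes> c) \<otimes> (b \<otimes> d)" .
  qed
  have "(e \<otimes> e0 \<oplus> g \<otimes> h) \<otimes> (e \<otimes> e0 \<oplus> g \<otimes> h) = (e \<otimes> e0 \<oplus> g \<otimes> h)"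
  proof -
    have "(e \<otimes> e0 \<oplus> g \<otimes> h) \<otimes> (e \<otimes> e0 \<oplus> g \<otimes> h)
       = ((e \<otimes> e0) \<otimes> (e \<otimes> e0) \<oplus> (e \<otimes> e0) \<otimes> (g \<otimes> h)) \<oplus> ((g \<otimes> h) \<otimes> (e \<otimes> e0) \<oplus> (g \<otimes> h) \<otimes> (g \<otimes> h))"
      using ec e0 gc hc by (simp add: l_distr r_distr a_ac)
    also have "\<dots> = ((e \<otimes> e) \<otimes> (e0 \<otimes> e0) \<oplus> (e \<otimes> g) \<otimes> (e0 \<otimes> h)) \<oplus> ((g \<otimes> e) \<otimes> (h \<otimes> e0) \<oplus> (g \<otimes> g) \<otimes> (h \<otimes> h))"
      using p[OF ec e0(1) ec e0(1) cen0[OF ec]] p[OF ec e0(1) gc hc cen0[OF gc]]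
        p[OF gc hc ec e0(1) ch[OF ec]] p[OF gc hc gc hc ch[OF gc]] by simp
    also have "\<dots> = e \<otimes> e0 \<oplus> g \<otimes> h" using ee e0 eg ge gg hh ec gc hc by simp
    finally show ?thesis .
  qed
  then show "r \<otimes> y \<otimes> e0 \<oplus> (\<one> \<ominus> r \<otimes> y) \<otimes> (\<one> \<ominus> e0) \<in> Idem_el R"
    unfolding Idem_el_def e_def[symmetric] g_def[symmetric] h_def[symmetric] using ec e0 gc hc by simp
qed


lemma plus_id:
  assumes "r \<in> carrier R" "e \<in> carrier R" "e0 \<in> carrier R"
  shows "r \<oplus> e0 = (r \<oplus> (\<one> \<ominus> e) \<otimes> (e0 \<ominus> (\<one> \<ominus> e0))) \<oplus> (e \<otimes> e0 \<oplus> (\<one> \<ominus> e) \<otimes> (\<one> \<ominus> e0))"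
  using assms by algebra
lemma minus_id:
  assumes "r \<in> carrier R" "e \<in> carrier R" "e0 \<in> carrier R"
  shows "r \<ominus> e0 = (r \<oplus> (\<one> \<ominus> e) \<otimes> ((\<one> \<ominus> e0) \<ominus> e0)) \<ominus> (e \<otimes> e0 \<oplus> (\<one> \<ominus> e) \<otimes> (\<one> \<ominus> e0))"
  using assms by algebra
lemma sq_id:
  assumes "e0 \<in> carrier R" "e0 \<otimes> e0 = e0"
  shows "(e0 \<ominus> (\<one> \<ominus> e0)) \<otimes> (e0 \<ominus> (\<one> \<ominus> e0)) = \<one>"
    and "((\<one> \<ominus> e0) \<ominus> e0) \<otimes> ((\<one> \<ominus> e0) \<ominus> e0) = \<one>"
proof -
  have "(e0 \<ominus> (\<one> \<ominus> e0)) \<otimes> (e0 \<ominus> (\<one> \<ominus> e0)) = \<one> \<oplus> (e0 \<otimes> e0 \<ominus> e0) \<oplus> (e0 \<otimes> e0 \<ominus> e0) \<oplus> (e0 \<otimes> e0 \<ominus> e0) \<oplus> (e0 \<otimes> e0 \<ominus> e0)"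
    using assms(1) by algebra simp
  then show "(e0 \<ominus> (\<one> \<ominus> e0)) \<otimes> (e0 \<ominus> (\<one> \<ominus> e0)) = \<one>" using assms by (simp add: minus_eq r_neg)
  have "((\<one> \<ominus> e0) \<ominus> e0) \<otimes> ((\<one> \<ominus> e0) \<ominus> e0) = \<one> \<oplus> (e0 \<otimes> e0 \<ominus> e0) \<oplus> (e0 \<otimes> e0 \<ominus> e0) \<oplus> (e0 \<otimes> e0 \<ominus> e0) \<oplus> (e0 \<otimes> e0 \<ominus> e0)"
    using assms(1) by algebra simp
  then show "((\<one> \<ominus> e0) \<ominus> e0) \<otimes> ((\<one> \<ominus> e0) \<ominus> e0) = \<one>" using assms by (simp add: minus_eq r_neg)
qed
lemma cen_id:
  assumes "e0 \<in> carrier R" "z \<in> carrier R" "e0 \<otimes> z = z \<otimes> e0"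
  shows "(e0 \<ominus> (\<one> \<ominus> e0)) \<otimes> z = z \<otimes> (e0 \<ominus> (\<one> \<ominus> e0))"
    and "((\<one> \<ominus> e0) \<ominus> e0) \<otimes> z = z \<otimes> ((\<one> \<ominus> e0) \<ominus> e0)"
proof -
  have "(e0 \<ominus> (\<one> \<ominus> e0)) \<otimes> z = e0 \<otimes> z \<oplus> e0 \<otimes> z \<ominus> z"
       "z \<otimes> (e0 \<ominus> (\<one> \<ominus> e0)) = z \<otimes> e0 \<oplus> z \<otimes> e0 \<ominus> z"
       "((\<one> \<ominus> e0) \<ominus> e0) \<otimes> z = z \<ominus> e0 \<otimes> z \<ominus> e0 \<otimes> z"
       "z \<otimes> ((\<one> \<ominus> e0) \<ominus> e0) = z \<ominus> z \<otimes> e0 \<ominus> z \<otimes> e0"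
    using assms(1,2) by (algebra; simp)+
  then show "(e0 \<ominus> (\<one> \<ominus> e0)) \<otimes> z = z \<otimes> (e0 \<ominus> (\<one> \<ominus> e0))"
    and "((\<one> \<ominus> e0) \<ominus> e0) \<otimes> z = z \<otimes> ((\<one> \<ominus> e0) \<ominus> e0)" using assms(3) by simp_all
qed

lemma ex_helper:
  "U \<in> carrier R \<Longrightarrow> W \<in> carrier R \<Longrightarrow> U \<otimes> W = \<one> \<Longrightarrow> E \<in> Idem_el R \<Longrightarrow> a = U \<oplus> E \<or> a = U \<ominus> E
   \<Longrightarrow> \<exists>U W E. U \<in> carrier R \<and> W \<in> carrier R \<and> U \<otimes> W = \<one> \<and> E \<in> Idem_el R
            \<and> (a = U \<oplus> E \<or> a = U \<ominus> E)"
  by blast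

lemma unit_decomp:
  assumes ab: "abelian_ring R" and w: "weakly_r_clean_elem R a"
  shows "\<exists>U W E. U \<in> carrier R \<and> W \<in> carrier R \<and> U \<otimes> W = \<one> \<and> E \<in> Idem_el R
            \<and> (a = U \<oplus> E \<or> a = U \<ominus> E)"
proof -
  obtain r e0 where r: "r \<in> Reg_el R" and e0: "e0 \<in> Idem_el R" and a: "a = r \<oplus> e0 \<or> a = r \<ominus> e0"
    using w unfolding weakly_r_clean_elem_def by blast
  obtain y where rc: "r \<in> carrier R" and y: "y \<in> carrier R" and ryr: "r = r \<otimes> y \<otimes> r"
    using r unfolding Reg_el_def by blast
  have ry: "r \<otimes> y \<in> carrier R" using rc y by simp
  have e0c: "e0 \<in> carrier R" "e0 \<otimes> e0 = e0" using e0 unfolding Idem_el_def by auto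
  have cen0: "\<And>z. z \<in> carrier R \<Longrightarrow> e0 \<otimes> z = z \<otimes> e0" using central_idem[OF ab e0c] by simp
  define E where "E = r \<otimes> y \<otimes> e0 \<oplus> (\<one> \<ominus> r \<otimes> y) \<otimes> (\<one> \<ominus> e0)"
  have E: "E \<in> Idem_el R" unfolding E_def
    by (rule decomp(2)[OF ab rc y ryr e0c one_closed]) simp_all
  have Ec: "E \<in> carrier R" using E unfolding Idem_el_def by simp
  show ?thesis
  proof (cases "a = r \<oplus> e0")
    case True
    define s where "s = e0 \<ominus> (\<one> \<ominus> e0)"
    have sc: "s \<in> carrier R" using e0c s_def by simp
    have ss: "s \<otimes> s = \<one>" unfolding s_def by (rule sq_id(1)[OF e0c])
    have scen: "\<And>z. z \<in> carrier R \<Longrightarrow> s \<otimes> z = z \<otimes> s" unfolding s_def by (rule cen_id(1)[OF e0c(1) _ cen0]; assumption)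
    obtain W where W: "W \<in> carrier R" "(r \<oplus> (\<one> \<ominus> r \<otimes> y) \<otimes> s) \<otimes> W = \<one>"
      using decomp(1)[OF ab rc y ryr e0c sc ss scen] by blast
    have "a = (r \<oplus> (\<one> \<ominus> r \<otimes> y) \<otimes> s) \<oplus> E"
      unfolding True s_def E_def using plus_id[OF rc ry e0c(1)] .
    moreover have "r \<oplus> (\<one> \<ominus> r \<otimes> y) \<otimes> s \<in> carrier R" using rc ry sc by simp
    ultimately show ?thesis using ex_helper[OF _ W E] by blast
  next
    case False
    then have aa: "a = r \<ominus> e0" using a by simp
    define s where "s = (\<one> \<ominus> e0) \<ominus> e0"
    have sc: "s \<in> carrier R" using e0c s_def by simp
    have ss: "s \<otimes> s = \<one>" unfolding s_def by (rule sq_id(2)[OF e0c])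
    have scen: "\<And>z. z \<in> carrier R \<Longrightarrow> s \<otimes> z = z \<otimes> s" unfolding s_def by (rule cen_id(2)[OF e0c(1) _ cen0]; assumption)
    obtain W where W: "W \<in> carrier R" "(r \<oplus> (\<one> \<ominus> r \<otimes> y) \<otimes> s) \<otimes> W = \<one>"
      using decomp(1)[OF ab rc y ryr e0c sc ss scen] by blast
    have "a = (r \<oplus> (\<one> \<ominus> r \<otimes> y) \<otimes> s) \<ominus> E"
      unfolding aa s_def E_def using minus_id[OF rc ry e0c(1)] .
    moreover have "r \<oplus> (\<one> \<ominus> r \<otimes> y) \<otimes> s \<in> carrier R" using rc ry sc by simp
    ultimately show ?thesis using ex_helper[OF _ W E] by blast
  qed
qed



lemma iter_closed:
  assumes cl: "\<And>x. x \<in> carrier R \<Longrightarrow> \<alpha> x \<in> carrier R" and x: "x \<in> carrier R"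
  shows "(\<alpha> ^^ i) x \<in> carrier R"
  by (induction i) (simp_all add: x cl)

lemma inv_pre_closed:
  assumes cl: "\<And>x. x \<in> carrier R \<Longrightarrow> \<alpha> x \<in> carrier R" and f: "\<And>n. f n \<in> carrier R"
    and w: "w \<in> carrier R"
  shows "inv_pre R \<alpha> f w n k \<in> carrier R"
proof (induction n arbitrary: k)
  case 0
  then show ?case using w by simp
next
  case (Suc n)
  have "finsum R (\<lambda>i. f i \<otimes> (\<alpha> ^^ i) (inv_pre R \<alpha> f w n (Suc n - i))) {1..Suc n} \<in> carrier R"
    by (rule finsum_closed) (auto intro!: m_closed f iter_closed[OF cl] Suc.IH)
  then show ?case using Suc.IH w by simp
qed

lemma inv_pre_stable:
  "k \<le> n \<Longrightarrow> inv_pre R \<alpha> f w n k = inv_ser R \<alpha> f w k"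
proof (induction n)
  case 0
  then show ?case by (simp add: inv_ser_def)
next
  case (Suc n)
  show ?case
  proof (cases "k = Suc n")
    case True
    then show ?thesis by (simp add: inv_ser_def)
  next
    case False
    then have "k \<le> n" using Suc.prems by simp
    then show ?thesis using Suc.IH False by simp
  qed
qed

lemma skew_mult_apply:
  "mult (skew_fps R \<alpha>) f g n = finsum R (\<lambda>i. f i \<otimes> (\<alpha> ^^ i) (g (n - i))) {0..n}"
  by (simp add: skew_fps_def)

lemma inv_ser_right_inv:
  assumes cl: "\<And>x. x \<in> carrier R \<Longrightarrow> \<alpha> x \<in> carrier R" and f: "\<And>n. f n \<in> carrier R"
    and w: "w \<in> carrier R" and fw: "f 0 \<otimes> w = \<one>"
  shows "mult (skew_fps R \<alpha>) f (inv_ser R \<alpha> f w) = one (skew_fps R \<alpha>)"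
    and "inv_ser R \<alpha> f w \<in> carrier (skew_fps R \<alpha>)"
proof -
  have gc: "\<And>k. inv_ser R \<alpha> f w k \<in> carrier R"
    unfolding inv_ser_def by (rule inv_pre_closed[OF cl f w])
  then show "inv_ser R \<alpha> f w \<in> carrier (skew_fps R \<alpha>)" by (simp add: skew_fps_def)
  show "mult (skew_fps R \<alpha>) f (inv_ser R \<alpha> f w) = one (skew_fps R \<alpha>)"
  proof (rule ext)
    fix n
    show "mult (skew_fps R \<alpha>) f (inv_ser R \<alpha> f w) n = one (skew_fps R \<alpha>) n"
    proof (cases n)
      case 0
      then show ?thesis using f w fw by (simp add: skew_mult_apply skew_fps_def inv_ser_def)
    next
      case (Suc m)
      define h where "h = (\<lambda>i. f i \<otimes> (\<alpha> ^^ i) (inv_ser R \<alpha> f w (Suc m - i)))"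
      define h' where "h' = (\<lambda>i. f i \<otimes> (\<alpha> ^^ i) (inv_pre R \<alpha> f w m (Suc m - i)))"
      have hc: "h \<in> {1..Suc m} \<rightarrow> carrier R" unfolding h_def
        using f gc iter_closed[OF cl] by auto
      have hc': "h' \<in> {1..Suc m} \<rightarrow> carrier R" unfolding h'_def
        using f inv_pre_closed[OF cl f w] iter_closed[OF cl] by auto
      have eqs: "finsum R h {1..Suc m} = finsum R h' {1..Suc m}"
      proof (rule finsum_cong'[OF refl hc'])
        fix i assume "i \<in> {1..Suc m}"
        then have "Suc m - i \<le> m" by auto
        then show "h i = h' i" unfolding h_def h'_def by (simp add: inv_pre_stable)
      qed
      have Sc: "finsum R h' {1..Suc m} \<in> carrier R" by (rule finsum_closed[OF hc'])
      have g0: "inv_ser R \<alpha> f w (Suc m) = \<ominus> (w \<otimes> finsum R h' {1..Suc m})"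
        unfolding inv_ser_def h'_def by simp
      have split: "{0..Suc m} = insert 0 {1..Suc m}" by auto
      have "finsum R h {0..Suc m} = h 0 \<oplus> finsum R h {1..Suc m}"
        unfolding split by (rule finsum_insert) (use hc gc f in \<open>auto simp: h_def\<close>)
      also have "h 0 = f 0 \<otimes> \<ominus> (w \<otimes> finsum R h' {1..Suc m})"
        unfolding h_def using g0 by simp
      also have "\<dots> = \<ominus> finsum R h' {1..Suc m}"
        using f w Sc fw by (simp add: r_minus m_assoc[symmetric])
      finally have "finsum R h {0..Suc m} = \<zero>"
        using eqs Sc by (simp add: l_neg)
      then show ?thesis using Suc by (simp add: skew_mult_apply skew_fps_def h_def)
    qed
  qed
qed


lemma skew_carrier: "f \<in> carrier (skew_fps R \<alpha>) \<longleftrightarrow> (\<forall>n. f n \<in> carrier R)"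
  by (simp add: skew_fps_def)

lemma skew_mult0:
  assumes "f 0 \<in> carrier R" "g 0 \<in> carrier R"
  shows "mult (skew_fps R \<alpha>) f g 0 = f 0 \<otimes> g 0"
  using assms by (simp add: skew_mult_apply)

lemma skew_one_mult:
  assumes cl: "\<And>x. x \<in> carrier R \<Longrightarrow> \<alpha> x \<in> carrier R" and f: "\<And>n. f n \<in> carrier R"
  shows "mult (skew_fps R \<alpha>) (one (skew_fps R \<alpha>)) f = f"
proof (rule ext)
  fix n
  define h where "h = (\<lambda>i. (if i = 0 then \<one> else \<zero>) \<otimes> (\<alpha> ^^ i) (f (n - i)))"
  have X: "\<And>i. (\<alpha> ^^ i) (f (n - i)) \<in> carrier R" by (rule iter_closed[OF cl f])
  have hc: "h \<in> {0..n} \<rightarrow> carrier R" unfolding h_def using X by auto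
  have split: "{0..n} = insert 0 {1..n}" by auto
  have "finsum R h {0..n} = h 0 \<oplus> finsum R h {1..n}"
    unfolding split by (rule finsum_insert) (use hc in auto)
  also have "finsum R h {1..n} = finsum R (\<lambda>i. \<zero>) {1..n}"
  proof (rule finsum_cong')
    fix i assume "i \<in> {1..n}"
    then show "h i = \<zero>" unfolding h_def using X[of i] by simp
  qed auto
  also have "\<dots> = \<zero>" by (rule finsum_zero)
  finally have "finsum R h {0..n} = f n" using f by (simp add: h_def)
  then show "mult (skew_fps R \<alpha>) (one (skew_fps R \<alpha>)) f n = f n"
    by (simp add: skew_mult_apply h_def skew_fps_def)
qed

lemma skew_reg:
  assumes cl: "\<And>x. x \<in> carrier R \<Longrightarrow> \<alpha> x \<in> carrier R" and f: "\<And>n. f n \<in> carrier R"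
    and w: "w \<in> carrier R" and fw: "f 0 \<otimes> w = \<one>"
  shows "f \<in> Reg_el (skew_fps R \<alpha>)"
  unfolding Reg_el_def
proof (intro CollectI conjI bexI)
  show "f \<in> carrier (skew_fps R \<alpha>)" using f by (simp add: skew_carrier)
  show "inv_ser R \<alpha> f w \<in> carrier (skew_fps R \<alpha>)" by (rule inv_ser_right_inv(2)[of \<alpha> f w, OF cl f w fw])
  show "f = mult (skew_fps R \<alpha>) (mult (skew_fps R \<alpha>) f (inv_ser R \<alpha> f w)) f"
    using inv_ser_right_inv(1)[of \<alpha> f w, OF cl f w fw] skew_one_mult[of \<alpha> f, OF cl f] by simp
qed

lemma skew_const_idem:
  assumes cl: "\<And>x. x \<in> carrier R \<Longrightarrow> \<alpha> x \<in> carrier R" and e: "e \<in> Idem_el R"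
  shows "(\<lambda>n. if n = 0 then e else \<zero>) \<in> Idem_el (skew_fps R \<alpha>)"
proof -
  have ec: "e \<in> carrier R" "e \<otimes> e = e" using e unfolding Idem_el_def by auto
  define c where "c = (\<lambda>n::nat. if n = 0 then e else \<zero>)"
  have cc: "\<And>n. c n \<in> carrier R" unfolding c_def using ec by simp
  have "mult (skew_fps R \<alpha>) c c = c"
  proof (rule ext)
    fix n
    show "mult (skew_fps R \<alpha>) c c n = c n"
    proof (cases n)
      case 0
      then show ?thesis using ec by (simp add: skew_mult_apply c_def)
    next
      case (Suc m)
      have "finsum R (\<lambda>i. c i \<otimes> (\<alpha> ^^ i) (c (n - i))) {0..n} = finsum R (\<lambda>i. \<zero>) {0..n}"
      proof (rule finsum_cong')
        fix i assume i: "i \<in> {0..n}"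
        have X: "(\<alpha> ^^ i) (c (n - i)) \<in> carrier R" by (rule iter_closed[OF cl cc])
        show "c i \<otimes> (\<alpha> ^^ i) (c (n - i)) = \<zero>"
        proof (cases "i = 0")
          case True
          then show ?thesis using Suc ec by (simp add: c_def)
        next
          case False
          then show ?thesis using X by (simp add: c_def)
        qed
      qed auto
      then show ?thesis using Suc by (simp add: skew_mult_apply c_def)
    qed
  qed
  then show ?thesis unfolding Idem_el_def c_def[symmetric] using cc by (simp add: skew_carrier)
qed

lemma skew_a_inv:
  assumes e: "\<And>n. e n \<in> carrier R"
  shows "a_inv (skew_fps R \<alpha>) e = (\<lambda>n. \<ominus> e n)"
  unfolding a_inv_def[of "skew_fps R \<alpha>"] m_inv_def[of "add_monoid (skew_fps R \<alpha>)"]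
  apply (rule the_equality)
   apply (simp add: skew_fps_def e r_neg l_neg)
  apply (clarsimp simp: skew_fps_def fun_eq_iff)
  apply (rule minus_equality[symmetric])
    apply (simp_all add: e)
  done

lemma wrc_intro:
  "r \<in> Reg_el S \<Longrightarrow> e \<in> Idem_el S \<Longrightarrow> a = add S r e \<or> a = a_minus S r e \<Longrightarrow> weakly_r_clean_elem S a"
  unfolding weakly_r_clean_elem_def by blast

lemma wrc_elim:
  "weakly_r_clean_elem S a \<Longrightarrow> \<exists>r e. r \<in> Reg_el S \<and> e \<in> Idem_el S \<and> (a = add S r e \<or> a = a_minus S r e)"
  unfolding weakly_r_clean_elem_def by blast

lemma clean_up:
  assumes cl: "\<And>x. x \<in> carrier R \<Longrightarrow> \<alpha> x \<in> carrier R" and ab: "abelian_ring R"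
    and w: "weakly_r_clean R"
  shows "weakly_r_clean (skew_fps R \<alpha>)"
  unfolding weakly_r_clean_def
proof
  fix f assume "f \<in> carrier (skew_fps R \<alpha>)"
  then have f: "\<And>n. f n \<in> carrier R" by (simp add: skew_carrier)
  have "weakly_r_clean_elem R (f 0)" using w f[of 0] unfolding weakly_r_clean_def by simp
  from unit_decomp[OF ab this] obtain U W E where U: "U \<in> carrier R" and W: "W \<in> carrier R" and UW: "U \<otimes> W = \<one>"
    and E: "E \<in> Idem_el R" and a: "f 0 = U \<oplus> E \<or> f 0 = U \<ominus> E"
    by blast
  have Ec: "E \<in> carrier R" using E unfolding Idem_el_def by simp
  define r where "r = (\<lambda>n. if n = 0 then U else f n)"
  define c where "c = (\<lambda>n::nat. if n = 0 then E else \<zero>)"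
  have rc: "\<And>n. r n \<in> carrier R" unfolding r_def using U f by simp
  have cc: "\<And>n. c n \<in> carrier R" unfolding c_def using Ec by simp
  have r0: "r 0 = U" unfolding r_def by simp
  have rR: "r \<in> Reg_el (skew_fps R \<alpha>)"
  proof (rule skew_reg)
    show "\<And>x. x \<in> carrier R \<Longrightarrow> \<alpha> x \<in> carrier R" by (rule cl)
    show "\<And>n. r n \<in> carrier R" by (rule rc)
    show "W \<in> carrier R" by (rule W)
    show "r 0 \<otimes> W = \<one>" using r0 UW by simp
  qed
  have cI: "c \<in> Idem_el (skew_fps R \<alpha>)" unfolding c_def
  proof (rule skew_const_idem)
    show "\<And>x. x \<in> carrier R \<Longrightarrow> \<alpha> x \<in> carrier R" by (rule cl)
    show "E \<in> Idem_el R" by (rule E)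
  qed
  have "f = add (skew_fps R \<alpha>) r c \<or> f = a_minus (skew_fps R \<alpha>) r c"
  proof (cases "f 0 = U \<oplus> E")
    case True
    have "f = add (skew_fps R \<alpha>) r c"
    proof (rule ext)
      fix n
      have "add (skew_fps R \<alpha>) r c n = r n \<oplus> c n" by (simp add: skew_fps_def)
      also have "\<dots> = f n"
      proof (cases "n = 0")
        case True
        then show ?thesis using \<open>f 0 = U \<oplus> E\<close> by (simp add: r_def c_def)
      next
        case False
        then show ?thesis using f[of n] by (simp add: r_def c_def)
      qed
      finally show "f n = add (skew_fps R \<alpha>) r c n" by simp
    qed
    then show ?thesis ..
  next
    case False
    then have F: "f 0 = U \<ominus> E" using a by simp
    have "f = a_minus (skew_fps R \<alpha>) r c"
    proof (rule ext)
      fix n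
      have "a_minus (skew_fps R \<alpha>) r c n = r n \<oplus> \<ominus> c n"
        unfolding a_minus_def skew_a_inv[OF cc] by (simp add: skew_fps_def)
      also have "\<dots> = f n"
      proof (cases "n = 0")
        case True
        then show ?thesis using F by (simp add: r_def c_def minus_eq)
      next
        case False
        then show ?thesis using f[of n] by (simp add: r_def c_def)
      qed
      finally show "f n = a_minus (skew_fps R \<alpha>) r c n" by simp
    qed
    then show ?thesis ..
  qed
  then show "weakly_r_clean_elem (skew_fps R \<alpha>) f" by (rule wrc_intro[OF rR cI])
qed

lemma clean_down:
  assumes w: "weakly_r_clean (skew_fps R \<alpha>)"
  shows "weakly_r_clean R"
  unfolding weakly_r_clean_def
proof
  fix a assume a: "a \<in> carrier R"
  define c where "c = (\<lambda>n::nat. if n = 0 then a else \<zero>)"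
  have "c \<in> carrier (skew_fps R \<alpha>)" unfolding c_def skew_carrier using a by simp
  then have "weakly_r_clean_elem (skew_fps R \<alpha>) c" using w unfolding weakly_r_clean_def by simp
  from wrc_elim[OF this] obtain r e where r: "r \<in> Reg_el (skew_fps R \<alpha>)" and e: "e \<in> Idem_el (skew_fps R \<alpha>)"
    and ce: "c = add (skew_fps R \<alpha>) r e \<or> c = a_minus (skew_fps R \<alpha>) r e"
    by blast
  from r obtain y where rc': "r \<in> carrier (skew_fps R \<alpha>)" and yc': "y \<in> carrier (skew_fps R \<alpha>)"
    and ryr: "r = mult (skew_fps R \<alpha>) (mult (skew_fps R \<alpha>) r y) r"
    unfolding Reg_el_def by blast
  have rc: "\<And>n. r n \<in> carrier R" using rc' by (simp add: skew_carrier)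
  have yc: "\<And>n. y n \<in> carrier R" using yc' by (simp add: skew_carrier)
  have ec: "\<And>n. e n \<in> carrier R" using e unfolding Idem_el_def by (simp add: skew_carrier)
  have ee: "mult (skew_fps R \<alpha>) e e = e" using e unfolding Idem_el_def by simp
  have "r 0 = mult (skew_fps R \<alpha>) (mult (skew_fps R \<alpha>) r y) r 0" using ryr by (rule fun_cong)
  also have "\<dots> = mult (skew_fps R \<alpha>) r y 0 \<otimes> r 0"
    by (rule skew_mult0) (simp_all add: skew_mult0 rc yc)
  also have "mult (skew_fps R \<alpha>) r y 0 = r 0 \<otimes> y 0" by (rule skew_mult0) (simp_all add: rc yc)
  finally have "r 0 = r 0 \<otimes> y 0 \<otimes> r 0" .
  then have r0: "r 0 \<in> Reg_el R" unfolding Reg_el_def using rc yc by blast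
  have "e 0 = mult (skew_fps R \<alpha>) e e 0" using ee by simp
  also have "\<dots> = e 0 \<otimes> e 0" by (rule skew_mult0) (simp_all add: ec)
  finally have e0: "e 0 \<in> Idem_el R" unfolding Idem_el_def using ec by simp
  have c0: "c 0 = a" unfolding c_def by simp
  have A: "add (skew_fps R \<alpha>) r e 0 = r 0 \<oplus> e 0" by (simp add: skew_fps_def)
  have B: "a_minus (skew_fps R \<alpha>) r e 0 = r 0 \<ominus> e 0"
    unfolding a_minus_def skew_a_inv[OF ec] by (simp add: skew_fps_def minus_eq)
  from ce have "c 0 = add (skew_fps R \<alpha>) r e 0 \<or> c 0 = a_minus (skew_fps R \<alpha>) r e 0" by auto
  then have "a = r 0 \<oplus> e 0 \<or> a = r 0 \<ominus> e 0" unfolding c0 A B .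
  then show "weakly_r_clean_elem R a" by (rule wrc_intro[OF r0 e0])
qed
end

theorem proposition2p12:
  fixes R :: "('a, 'b) ring_scheme" and \<alpha> :: "'a \<Rightarrow> 'a"
  assumes "ring R"
    and "abelian_ring R"
    and "\<alpha> \<in> ring_hom R R"
  shows "(weakly_r_clean R \<longleftrightarrow> weakly_r_clean (fps_ring R))
       \<and> (weakly_r_clean (fps_ring R) \<longleftrightarrow> weakly_r_clean (skew_fps R \<alpha>))"
proof -
  interpret ring R by (rule assms(1))
  have cla: "\<And>x. x \<in> carrier R \<Longrightarrow> \<alpha> x \<in> carrier R"
    using ring_hom_closed[OF assms(3)] by simp
  have cli: "\<And>x. x \<in> carrier R \<Longrightarrow> id x \<in> carrier R" by simp
  have up1: "weakly_r_clean R \<Longrightarrow> weakly_r_clean (skew_fps R id)"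
    by (rule clean_up[where \<alpha>=id, OF cli assms(2)])
  have up2: "weakly_r_clean R \<Longrightarrow> weakly_r_clean (skew_fps R \<alpha>)"
    by (rule clean_up[where \<alpha>=\<alpha>, OF cla assms(2)])
  have d1: "weakly_r_clean (skew_fps R id) \<Longrightarrow> weakly_r_clean R"
    by (rule clean_down[where \<alpha>=id])
  have d2: "weakly_r_clean (skew_fps R \<alpha>) \<Longrightarrow> weakly_r_clean R"
    by (rule clean_down[where \<alpha>=\<alpha>])
  show ?thesis unfolding fps_ring_def using up1 up2 d1 d2 by blast
qed

end
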